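(* Let $\varphi$ be a quantifier-free formula in the SMT theory of floating-point numbers and $\mathit{cost}$ a floating-point variable occurring in $\varphi$ with $n$ bits, and suppose $\varphi_{\mathrm{noNaN}}:=\varphi\wedge\neg\mathrm{isNaN}(\mathit{cost})$ is satisfiable; consider minimization (resp. maximization) of $\mathit{cost}$. Let $T$ be the attractor trajectory defined below. Then any model $\mathcal{M}$ of $\varphi_{\mathrm{noNaN}}$ which lexicographically maximizes $T$ with respect to $\varphi_{\mathrm{noNaN}}$ is an optimal solution of the problem, i.e. there is no model $\mathcal{M}'$ of $\varphi_{\mathrm{noNaN}}$ with $\mathcal{M}'(\mathit{cost})<\mathcal{M}(\mathit{cost})$ (resp. $\mathcal{M}'(\mathit{cost})>\mathcal{M}(\mathit{cost})$).
   Context: Bits of $\mathit{cost}$ are indexed from most significant $\mathit{cost}[0]$ (sign) to least significant $\mathit{cost}[n-1]$; $n=e+s$ where $e$ is the number of exponent bits and $s$ the number of significand bits including the hidden bit, with IEEE 754-2008 binary semantics: with bias $b=2^{e-1}-1$, exponent field $E$ all ones and significand $m=0$ gives $\pm\infty$, $E$ all ones and $m\neq0$ gives NaN, $E=0$ gives the subnormal $(-1)^\sigma2^{1-b}(0.m)_2$, otherwise the normal $(-1)^\sigma2^{E-b}(1.m)_2$. The order $\le,<$ is the usual total order on non-NaN floating-point values ($+0$ and $-0$ equal). For an assignment $\tau_k$ to the $k$ most significant bits of $\mathit{cost}$, the dynamic attractor $d_{\tau_k}$ is the smallest (resp. largest) non-NaN floating-point value whose $k$ most significant bits agree with $\tau_k$,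 and $A^{\tau_k}[i]:=(\mathit{cost}[i]=d_{\tau_k}[i])$. Inductively, $\tau_0=\emptyset$ and for $k\in[0..n-1]$, $\tau_{k+1}=\tau_k\cup\{\mathit{cost}[k]:=b_k\}$ where $b_k=\overline{d_{\tau_k}[k]}$ if $\varphi_{\mathrm{noNaN}}\wedge\tau_k\wedge A^{\tau_k}[k]$ is unsatisfiable and $b_k=d_{\tau_k}[k]$ otherwise. The attractor trajectory is $T=[A^{\tau_0}[0],\dots,A^{\tau_{n-1}}[n-1]]$. For an assignment $\mu$ to all bits of $\mathit{cost}$, $\mu|_k$ is its restriction to $\mathit{cost}[0..k-1]$; $\mu$ lexicographically maximizes $T$ with respect to $\varphi_{\mathrm{noNaN}}$ iff for every $k\in[0..n-1]$: $\mu[k]=\overline{d_{\tau_k}[k]}$ if $\varphi_{\mathrm{noNaN}}\wedge\mu|_k\wedge T[k]$ is unsatisfiable, and $\mu[k]=d_{\tau_k}[k]$ otherwise. A model lexicographically maximizes $T$ iff its restriction to the bits of $\mathit{cost}$ does. *)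

theory Defs
  imports Complex_Main "HOL-Library.Extended_Real"
begin

text \<open>Bit vectors are lists of booleans, index 0 = most significant bit (the sign).
  Format: e exponent bits, s significand bits including the hidden bit, n = e + s.\<close>

definition bits_to_nat :: "bool list \<Rightarrow> nat" where
  "bits_to_nat bs = foldl (\<lambda>acc b. 2 * acc + (if b then 1 else 0)) 0 bs"

definition fp_exp_field :: "nat \<Rightarrow> bool list \<Rightarrow> nat" where
  "fp_exp_field e bv = bits_to_nat (take e (drop 1 bv))"

definition fp_frac_field :: "nat \<Rightarrow> bool list \<Rightarrow> nat" where
  "fp_frac_field e bv = bits_to_nat (drop (Suc e) bv)"

definition fp_bias :: "nat \<Rightarrow> int" where
  "fp_bias e = 2 ^ (e - 1) - 1"

definition fp_is_nan :: "nat \<Rightarrow> nat \<Rightarrow> bool list \<Rightarrow> bool" where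
  "fp_is_nan e s bv \<longleftrightarrow> fp_exp_field e bv = 2 ^ e - 1 \<and> fp_frac_field e bv \<noteq> 0"

text \<open>Value of a non-NaN floating-point bit vector (IEEE 754-2008 binary semantics);
  +0 and -0 both map to 0, so they are equal in the order.\<close>
definition fp_value :: "nat \<Rightarrow> nat \<Rightarrow> bool list \<Rightarrow> ereal" where
  "fp_value e s bv =
    (let sg = bv ! 0; E = fp_exp_field e bv; m = fp_frac_field e bv;
         b = fp_bias e; sgn_r = (if sg then -1 else 1 :: real) in
     if E = 2 ^ e - 1 then (if sg then -\<infinity> else \<infinity>)
     else if E = 0 then ereal (sgn_r * 2 powr (real_of_int (1 - b)) * (real m / 2 ^ (s - 1)))
     else ereal (sgn_r * 2 powr (real_of_int (int E - b)) * (1 + real m / 2 ^ (s - 1))))"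

definition fp_better :: "bool \<Rightarrow> ereal \<Rightarrow> ereal \<Rightarrow> bool" where
  "fp_better mx x y \<longleftrightarrow> (if mx then x > y else x < y)"

definition fp_candidates :: "nat \<Rightarrow> nat \<Rightarrow> bool list \<Rightarrow> bool list set" where
  "fp_candidates e s p =
     {bv. length bv = e + s \<and> take (length p) bv = p \<and> \<not> fp_is_nan e s bv}"

definition attractor :: "nat \<Rightarrow> nat \<Rightarrow> bool \<Rightarrow> bool list \<Rightarrow> bool list" where
  "attractor e s mx p =
     (SOME bv. bv \<in> fp_candidates e s p \<and>
        (\<forall>bv' \<in> fp_candidates e s p. \<not> fp_better mx (fp_value e s bv') (fp_value e s bv)))"

definition sat_prefix_bit ::
  "nat \<Rightarrow> nat \<Rightarrow> ('m \<Rightarrow> bool) \<Rightarrow> ('m \<Rightarrow> bool list) \<Rightarrow> bool list \<Rightarrow> bool \<Rightarrow> bool" where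
  "sat_prefix_bit e s phi cost p b \<longleftrightarrow>
     (\<exists>M. phi M \<and> \<not> fp_is_nan e s (cost M) \<and> take (length p) (cost M) = p
          \<and> cost M ! length p = b)"

fun tau :: "nat \<Rightarrow> nat \<Rightarrow> bool \<Rightarrow> ('m \<Rightarrow> bool) \<Rightarrow> ('m \<Rightarrow> bool list) \<Rightarrow> nat \<Rightarrow> bool list" where
  "tau e s mx phi cost 0 = []"
| "tau e s mx phi cost (Suc k) =
     (let t = tau e s mx phi cost k; d = attractor e s mx t in
      t @ [if \<not> sat_prefix_bit e s phi cost t (d ! k) then \<not> (d ! k) else d ! k])"

text \<open>mu lexicographically maximizes the attractor trajectory T w.r.t. phi_noNaN.\<close>
definition lex_max_T ::
  "nat \<Rightarrow> nat \<Rightarrow> bool \<Rightarrow> ('m \<Rightarrow> bool) \<Rightarrow> ('m \<Rightarrow> bool list) \<Rightarrow> bool list \<Rightarrow> bool" where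
  "lex_max_T e s mx phi cost mu \<longleftrightarrow> length mu = e + s \<and>
     (\<forall>k < e + s.
        (let d = attractor e s mx (tau e s mx phi cost k) in
         mu ! k = (if \<not> sat_prefix_bit e s phi cost (take k mu) (d ! k) then \<not> (d ! k) else d ! k)))"

end

theory Submission imports Defs begin

lemma btn_snoc[simp]: "bits_to_nat (xs @ [b]) = 2 * bits_to_nat xs + (if b then 1 else 0)"
  by (simp add: bits_to_nat_def)

lemma btn_Nil[simp]: "bits_to_nat [] = 0" by (simp add: bits_to_nat_def)

lemma btn_append: "bits_to_nat (xs @ ys) = bits_to_nat xs * 2 ^ length ys + bits_to_nat ys"
proof (induction ys rule: rev_induct)
  case Nil then show ?case by simp
next
  case (snoc y ys) then show ?case
    by (simp flip: append_assoc add: algebra_simps)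
qed

lemma btn_less: "bits_to_nat xs < 2 ^ length xs"
proof (induction xs rule: rev_induct)
  case Nil then show ?case by simp
next
  case (snoc y ys) then show ?case by auto
qed

lemma btn_inj: "length xs = length ys \<Longrightarrow> bits_to_nat xs = bits_to_nat ys \<Longrightarrow> xs = ys"
proof (induction xs arbitrary: ys rule: rev_induct)
  case Nil then show ?case by simp
next
  case (snoc x xs)
  then obtain ys' c where ys: "ys = ys' @ [c]" by (metis length_0_conv rev_exhaust snoc_eq_iff_butlast)
  with snoc.prems have len: "length ys' = length xs" by simp
  from snoc.prems ys have eq: "2 * bits_to_nat xs + (if x then 1 else 0) = 2 * bits_to_nat ys' + (if c then 1 else 0)" by simp
  have xc: "x = c" using arg_cong[OF eq, of "\<lambda>v. v mod 2"] by (auto split: if_splits)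
  have "bits_to_nat xs = bits_to_nat ys'" using eq xc by auto
  then show ?case using snoc.IH ys len xc by simp
qed

lemma btn_rep_True: "bits_to_nat (replicate k True) = 2 ^ k - 1"
proof (induction k)
  case 0 then show ?case by simp
next
  case (Suc k)
  have "bits_to_nat (replicate (Suc k) True) = bits_to_nat (replicate k True @ [True])"
    by (simp add: replicate_append_same)
  also have "\<dots> = 2 * (2 ^ k - 1) + 1" using Suc by simp
  also have "\<dots> = 2 ^ Suc k - 1"
  proof -
    obtain t where "(2::nat) ^ k = Suc t" using not0_implies_Suc[of "(2::nat)^k"] by auto
    thus ?thesis by simp
  qed
  finally show ?case .
qed

lemma btn_rep_False: "bits_to_nat (replicate k False) = 0"
  by (induction k) (simp_all add: replicate_append_same[symmetric])

lemma btn_take_div: "j \<le> length xs \<Longrightarrow> bits_to_nat (take j xs) = bits_to_nat xs div 2 ^ (length xs - j)"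
proof -
  assume j: "j \<le> length xs"
  have "bits_to_nat xs = bits_to_nat (take j xs) * 2 ^ (length xs - j) + bits_to_nat (drop j xs)"
    by (metis append_take_drop_id btn_append length_drop)
  moreover have "bits_to_nat (drop j xs) < 2 ^ (length xs - j)" using btn_less[of "drop j xs"] by simp
  ultimately show ?thesis by simp
qed

lemma convex:
  assumes "length a = L" "length y = L" "length c = L" "j \<le> L" "take j a = take j c"
    "bits_to_nat a \<le> bits_to_nat y" "bits_to_nat y \<le> bits_to_nat c"
  shows "take j y = take j a"
proof -
  have "bits_to_nat (take j a) \<le> bits_to_nat (take j y)" "bits_to_nat (take j y) \<le> bits_to_nat (take j c)"
    using assms(1-4,6,7) by (simp_all add: btn_take_div div_le_mono)
  hence "bits_to_nat (take j y) = bits_to_nat (take j a)" using assms(5) by simp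
  thus ?thesis using assms by (intro btn_inj) auto
qed


definition pv :: "nat \<Rightarrow> nat \<Rightarrow> nat \<Rightarrow> nat \<Rightarrow> ereal" where
  "pv e s E m = (if E = 2 ^ e - 1 then \<infinity>
     else if E = 0 then ereal (2 powr real_of_int (1 - fp_bias e) * (real m / 2 ^ (s - 1)))
     else ereal (2 powr real_of_int (int E - fp_bias e) * (1 + real m / 2 ^ (s - 1))))"

lemma fp_value_pv: "fp_value e s bv =
  (if bv ! 0 then - pv e s (fp_exp_field e bv) (fp_frac_field e bv) else pv e s (fp_exp_field e bv) (fp_frac_field e bv))"
  by (auto simp: fp_value_def pv_def Let_def)

lemma pv_nonneg: "pv e s E m \<ge> 0"
  by (auto simp: pv_def)

lemma pv_upper:
  assumes "E \<noteq> 2 ^ e - 1" "m < 2 ^ (s - 1)"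
  shows "pv e s E m < ereal (2 powr real_of_int (int E + 1 - fp_bias e))"
proof -
  define K :: real where "K = 2 ^ (s - 1)"
  have "real m < real ((2::nat) ^ (s - 1))" using assms(2) by (simp only: of_nat_less_iff)
  hence K: "K > 0" "real m < K" unfolding K_def by simp_all
  have mk: "real m / K < 1" using K by simp
  show ?thesis
  proof (cases "E = 0")
    case True
    have "2 powr real_of_int (1 - fp_bias e) * (real m / K) < 2 powr real_of_int (1 - fp_bias e) * 1"
      by (rule mult_strict_left_mono[OF mk]) simp
    hence "2 powr real_of_int (1 - fp_bias e) * (real m / K) < 2 powr real_of_int (1 - fp_bias e)"
      by simp
    then show ?thesis using True assms(1) by (simp add: pv_def K_def)
  next
    case False
    have "2 powr real_of_int (int E - fp_bias e) * (1 + real m / K) < 2 powr real_of_int (int E - fp_bias e) * 2"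
      by (rule mult_strict_left_mono) (use mk in simp_all)
    also have "\<dots> = 2 powr real_of_int (int E + 1 - fp_bias e)"
    proof -
      have "real_of_int (int E + 1 - fp_bias e) = real_of_int (int E - fp_bias e) + 1" by simp
      thus ?thesis by (simp only: powr_add) simp
    qed
    finally show ?thesis using False assms(1) by (simp add: pv_def K_def)
  qed
qed

lemma pv_lower:
  assumes "E \<noteq> 2 ^ e - 1" "E \<noteq> 0"
  shows "ereal (2 powr real_of_int (int E - fp_bias e)) \<le> pv e s E m"
  using assms by (simp add: pv_def)

lemma pv_strict:
  assumes "E1 < E2 \<or> (E1 = E2 \<and> m1 < m2)" "E2 \<le> 2 ^ e - 1" "m1 < 2 ^ (s - 1)"
    "E2 = 2 ^ e - 1 \<longrightarrow> m2 = 0"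
  shows "pv e s E1 m1 < pv e s E2 m2"
proof (cases "E1 < E2")
  case True
  hence n1: "E1 \<noteq> 2 ^ e - 1" using assms(2) by simp
  show ?thesis
  proof (cases "E2 = 2 ^ e - 1")
    case True
    then show ?thesis using n1 by (simp add: pv_def)
  next
    case False
    have "pv e s E1 m1 < ereal (2 powr real_of_int (int E1 + 1 - fp_bias e))"
      using pv_upper n1 assms(3) by blast
    also have "\<dots> \<le> ereal (2 powr real_of_int (int E2 - fp_bias e))"
      using \<open>E1 < E2\<close> by simp
    also have "\<dots> \<le> pv e s E2 m2" using pv_lower False \<open>E1 < E2\<close> by simp
    finally show ?thesis .
  qed
next
  case False
  hence eq: "E1 = E2" "m1 < m2" using assms(1) by auto
  hence nt: "E2 \<noteq> 2 ^ e - 1" using assms(4) by auto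
  have d: "real m1 / 2 ^ (s - 1) < real m2 / 2 ^ (s - 1)" using eq(2) by (simp add: divide_strict_right_mono)
  have p: "(2::real) powr X > 0" for X by simp
  show ?thesis
  proof (cases "E2 = 0")
    case True
    then show ?thesis using eq nt mult_strict_left_mono[OF d p] by (simp add: pv_def)
  next
    case False
    have d2: "1 + real m1 / 2 ^ (s - 1) < 1 + real m2 / 2 ^ (s - 1)" using d by simp
    show ?thesis using False eq nt mult_strict_left_mono[OF d2 p] by (simp add: pv_def)
  qed
qed


lemma decomp:
  assumes "length bv = e + s" "s \<ge> 1"
  shows "bits_to_nat bv = (if bv ! 0 then 2 ^ (e + s - 1) else 0) + fp_exp_field e bv * 2 ^ (s - 1) + fp_frac_field e bv"
    "fp_frac_field e bv < 2 ^ (s - 1)" "fp_exp_field e bv < 2 ^ e"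
proof -
  obtain x xs where bv: "bv = x # xs" using assms by (cases bv) auto
  have lx: "length xs = e + s - 1" using assms bv by simp
  have ex: "fp_exp_field e bv = bits_to_nat (take e xs)" by (simp add: fp_exp_field_def bv)
  have fx: "fp_frac_field e bv = bits_to_nat (drop e xs)" by (simp add: fp_frac_field_def bv)
  have x1: "bits_to_nat [x] = (if x then 1 else 0)" using btn_snoc[of "[]" x] by simp
  have "bits_to_nat bv = bits_to_nat ([x] @ xs)" by (simp add: bv)
  also have "\<dots> = (if x then 2 ^ (e + s - 1) else 0) + bits_to_nat xs" by (simp only: btn_append x1 lx) simp
  also have "bits_to_nat xs = bits_to_nat (take e xs @ drop e xs)" by simp
  also have "\<dots> = bits_to_nat (take e xs) * 2 ^ (s - 1) + bits_to_nat (drop e xs)"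
    by (simp only: btn_append) (simp add: lx)
  finally show "bits_to_nat bv = (if bv ! 0 then 2 ^ (e + s - 1) else 0) + fp_exp_field e bv * 2 ^ (s - 1) + fp_frac_field e bv"
    unfolding ex fx using bv by simp
  show "fp_frac_field e bv < 2 ^ (s - 1)" using btn_less[of "drop e xs"] lx by (simp add: fx)
  have "length (take e xs) = e" using lx assms(2) by simp
  thus "fp_exp_field e bv < 2 ^ e" using btn_less[of "take e xs"] by (simp add: ex)
qed

lemma lexlt:
  fixes K :: nat
  assumes "m1 < K" "m2 < K" "E1 * K + m1 < E2 * K + m2"
  shows "E1 < E2 \<or> (E1 = E2 \<and> m1 < m2)"
proof (rule ccontr)
  assume "\<not> ?thesis"
  hence "E2 < E1 \<or> (E1 = E2 \<and> m2 \<le> m1)" by auto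
  thus False
  proof
    assume "E2 < E1"
    hence "(E2 + 1) * K \<le> E1 * K" by (intro mult_le_mono1) simp
    thus False using assms by (simp add: algebra_simps)
  next
    assume "E1 = E2 \<and> m2 \<le> m1" thus False using assms by simp
  qed
qed

lemma val_strict:
  assumes "length a = e + s" "length b = e + s" "s \<ge> 1"
    "\<not> fp_is_nan e s a" "\<not> fp_is_nan e s b" "a ! 0 = b ! 0" "bits_to_nat a < bits_to_nat b"
  shows "if a ! 0 then fp_value e s b < fp_value e s a else fp_value e s a < fp_value e s b"
proof -
  note da = decomp[OF assms(1,3)] and db = decomp[OF assms(2,3)]
  have "fp_exp_field e a * 2 ^ (s - 1) + fp_frac_field e a < fp_exp_field e b * 2 ^ (s - 1) + fp_frac_field e b"
    using da(1) db(1) assms(6,7) by simp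
  hence lx: "fp_exp_field e a < fp_exp_field e b \<or> (fp_exp_field e a = fp_exp_field e b \<and> fp_frac_field e a < fp_frac_field e b)"
    using lexlt da(2) db(2) by blast
  have "pv e s (fp_exp_field e a) (fp_frac_field e a) < pv e s (fp_exp_field e b) (fp_frac_field e b)"
    using pv_strict[OF lx] db(3) da(2) assms(5) by (simp add: fp_is_nan_def)
  thus ?thesis using assms(6) by (simp add: fp_value_pv)
qed

lemma val_sign: "\<not> bv ! 0 \<Longrightarrow> fp_value e s bv \<ge> 0" "bv ! 0 \<Longrightarrow> fp_value e s bv \<le> 0"
  using pv_nonneg by (auto simp: fp_value_pv)

lemma between:
  assumes "length a = e + s" "length y = e + s" "length c = e + s" "s \<ge> 1"
    "\<not> fp_is_nan e s a" "\<not> fp_is_nan e s y" "\<not> fp_is_nan e s c"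
    "a ! 0 = y ! 0" "c ! 0 = y ! 0"
    "fp_value e s a \<le> fp_value e s y" "fp_value e s y \<le> fp_value e s c"
  shows "if y ! 0 then bits_to_nat c \<le> bits_to_nat y \<and> bits_to_nat y \<le> bits_to_nat a
         else bits_to_nat a \<le> bits_to_nat y \<and> bits_to_nat y \<le> bits_to_nat c"
proof (cases "y ! 0")
  case True
  have "\<not> bits_to_nat y < bits_to_nat c"
    using val_strict[OF assms(2,3,4,6,7)] assms True by (auto simp: not_less[symmetric])
  moreover have "\<not> bits_to_nat a < bits_to_nat y"
    using val_strict[OF assms(1,2,4,5,6)] assms True by (auto simp: not_less[symmetric])
  ultimately show ?thesis using True by simp
next
  case False
  have "\<not> bits_to_nat y < bits_to_nat a"
    using val_strict[OF assms(2,1,4,6,5)] assms False by (auto simp: not_less[symmetric])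
  moreover have "\<not> bits_to_nat c < bits_to_nat y"
    using val_strict[OF assms(3,2,4,7,6)] assms False by (auto simp: not_less[symmetric])
  ultimately show ?thesis using False by simp
qed


lemma witness:
  assumes "s \<ge> 1" "w = sg # replicate e True @ replicate (s - 1) False"
  shows "length w = e + s" "\<not> fp_is_nan e s w" "w ! 0 = sg"
    "fp_value e s w = (if sg then - \<infinity> else \<infinity>)"
proof -
  have ex: "fp_exp_field e w = 2 ^ e - 1"
    using assms(2) by (simp add: fp_exp_field_def btn_rep_True)
  have fx: "fp_frac_field e w = 0"
    using assms(2) by (simp add: fp_frac_field_def btn_rep_False)
  show "length w = e + s" using assms by simp
  show "\<not> fp_is_nan e s w" using fx by (simp add: fp_is_nan_def)
  show w0: "w ! 0 = sg" using assms by simp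
  show "fp_value e s w = (if sg then - \<infinity> else \<infinity>)"
    using ex w0 by (simp add: fp_value_pv pv_def)
qed

lemma sep:
  assumes "length a = e + s" "length y = e + s" "length c = e + s" "s \<ge> 1"
    "\<not> fp_is_nan e s a" "\<not> fp_is_nan e s y" "\<not> fp_is_nan e s c"
    "k < e + s" "0 < k" "take (Suc k) a = take (Suc k) c" "take k y = take k a" "y ! k \<noteq> a ! k"
    "fp_value e s a \<le> fp_value e s y" "fp_value e s y \<le> fp_value e s c"
  shows False
proof -
  have s1: "a ! 0 = c ! 0" using assms(10) by (metis nth_take zero_less_Suc)
  have s2: "y ! 0 = a ! 0" using assms(9,11) by (metis nth_take)
  note b = between[OF assms(1,2,3,4,5,6,7) s2[symmetric] _ assms(13,14)]
  have "take (Suc k) y = take (Suc k) a"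
  proof (cases "y ! 0")
    case True
    then have "bits_to_nat c \<le> bits_to_nat y" "bits_to_nat y \<le> bits_to_nat a" using b s1 s2 by auto
    then have "take (Suc k) y = take (Suc k) c"
      using convex[OF assms(3,2,1), of "Suc k"] assms(8,10) by simp
    then show ?thesis using assms(10) by simp
  next
    case False
    then have "bits_to_nat a \<le> bits_to_nat y" "bits_to_nat y \<le> bits_to_nat c" using b s1 s2 by auto
    then show "take (Suc k) y = take (Suc k) a"
      using convex[OF assms(1,2,3), of "Suc k"] assms(8,10) by simp
  qed
  hence "y ! k = a ! k" by (metis lessI nth_take)
  thus False using assms(12) by simp
qed

lemma cands_finite: "finite (fp_candidates e s p)"
proof -
  have "finite {xs. set xs \<subseteq> (UNIV :: bool set) \<and> length xs = e + s}"
    by (rule finite_lists_length_eq) simp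
  thus ?thesis by (rule finite_subset[rotated]) (auto simp: fp_candidates_def)
qed

lemma attr:
  assumes "fp_candidates e s p \<noteq> {}"
  shows "attractor e s mx p \<in> fp_candidates e s p \<and>
    (\<forall>bv' \<in> fp_candidates e s p. \<not> fp_better mx (fp_value e s bv') (fp_value e s (attractor e s mx p)))"
proof -
  let ?C = "fp_candidates e s p"
  let ?V = "fp_value e s ` ?C"
  have fin: "finite ?V" "?V \<noteq> {}" using cands_finite assms by auto
  have "\<exists>bv. bv \<in> ?C \<and> (\<forall>bv' \<in> ?C. \<not> fp_better mx (fp_value e s bv') (fp_value e s bv))"
  proof (cases mx)
    case True
    obtain bv where bv: "bv \<in> ?C" "fp_value e s bv = Max ?V" using Max_in[OF fin] by auto
    have "\<forall>bv' \<in> ?C. fp_value e s bv' \<le> Max ?V" using fin by auto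
    then show ?thesis using bv True by (auto simp: fp_better_def not_less)
  next
    case False
    obtain bv where bv: "bv \<in> ?C" "fp_value e s bv = Min ?V" using Min_in[OF fin] by auto
    have "\<forall>bv' \<in> ?C. Min ?V \<le> fp_value e s bv'" using fin by auto
    then show ?thesis using bv False by (auto simp: fp_better_def not_less)
  qed
  then show ?thesis unfolding attractor_def by (rule someI_ex)
qed


lemma key:
  assumes s1: "s \<ge> 1" and k: "k < e + s" "length p = k"
    and d: "d \<in> fp_candidates e s p"
    and ext: "\<forall>c \<in> fp_candidates e s p. \<not> fp_better mx (fp_value e s c) (fp_value e s d)"
    and x: "length x = e + s" "\<not> fp_is_nan e s x" "take k x = p" "x ! k = d ! k"
    and y: "length y = e + s" "\<not> fp_is_nan e s y" "take k y = p" "y ! k \<noteq> d ! k"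
  shows "\<not> fp_better mx (fp_value e s y) (fp_value e s x)"
proof
  assume bet: "fp_better mx (fp_value e s y) (fp_value e s x)"
  have dl: "length d = e + s" "\<not> fp_is_nan e s d" "take k d = p" using d k by (auto simp: fp_candidates_def)
  have tdx: "take (Suc k) x = take (Suc k) d"
    using x dl k by (simp add: take_Suc_conv_app_nth)
  have "y \<in> fp_candidates e s p" using y k by (simp add: fp_candidates_def)
  hence nyd: "\<not> fp_better mx (fp_value e s y) (fp_value e s d)" using ext by blast
  show False
  proof (cases "k = 0")
    case True
    hence p0: "p = []" using k by simp
    have x0: "x ! 0 = d ! 0" and y0: "y ! 0 \<noteq> d ! 0" using x y True by auto
    define w where "w = (\<not> mx) # replicate e True @ replicate (s - 1) False"
    note W = witness[OF s1 w_def]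
    have wc: "w \<in> fp_candidates e s p" using W p0 by (simp add: fp_candidates_def)
    show False
    proof (cases mx)
      case False
      hence lt: "fp_value e s y < fp_value e s x" "fp_value e s d \<le> fp_value e s y"
        using bet nyd by (auto simp: fp_better_def not_less)
      show False
      proof (cases "d ! 0")
        case True
        then show False using val_sign[of x e s] val_sign[of y e s] x0 y0 lt by auto
      next
        case dF: False
        have "fp_value e s d \<ge> 0" using val_sign(1)[of d e s] dF by simp
        hence "fp_better mx (fp_value e s w) (fp_value e s d)" using W(4) False by (auto simp: fp_better_def)
        then show False using ext wc by blast
      qed
    next
      case True
      hence lt: "fp_value e s x < fp_value e s y" "fp_value e s y \<le> fp_value e s d"
        using bet nyd by (auto simp: fp_better_def not_less)
      show False
      proof (cases "d ! 0")
        case False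
        then show False using val_sign[of x e s] val_sign[of y e s] x0 y0 lt by auto
      next
        case dT: True
        have "fp_value e s d \<le> 0" using val_sign(2)[of d e s] dT by simp
        hence "fp_better mx (fp_value e s w) (fp_value e s d)" using W(4) True by (auto simp: fp_better_def)
        then show False using ext wc by blast
      qed
    qed
  next
    case False
    hence k0: "0 < k" by simp
    show False
    proof (cases mx)
      case False
      hence lt: "fp_value e s y \<le> fp_value e s x" "fp_value e s d \<le> fp_value e s y"
        using bet nyd by (auto simp: fp_better_def not_less)
      show False
        by (rule sep[OF dl(1) y(1) x(1) s1 dl(2) y(2) x(2) k(1) k0 tdx[symmetric] _ y(4) lt(2) lt(1)])
           (simp add: y dl)
    next
      case True
      hence lt: "fp_value e s x \<le> fp_value e s y" "fp_value e s y \<le> fp_value e s d"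
        using bet nyd by (auto simp: fp_better_def not_less)
      show False
        by (rule sep[OF x(1) y(1) dl(1) s1 x(2) y(2) dl(2) k(1) k0 tdx _ _ lt])
           (simp_all add: y x)
    qed
  qed
qed


lemma len_tau: "length (tau e s mx phi cost k) = k"
  by (induction k) (simp_all add: Let_def)

theorem theorem2:
  fixes e s :: nat and mx :: bool
    and phi :: "'m \<Rightarrow> bool" and cost :: "'m \<Rightarrow> bool list" and M :: 'm
  assumes "e \<ge> 2" and "s \<ge> 2"
    and "\<forall>N. phi N \<longrightarrow> length (cost N) = e + s"
    and "\<exists>N. phi N \<and> \<not> fp_is_nan e s (cost N)"
    and "phi M" and "\<not> fp_is_nan e s (cost M)"
    and "lex_max_T e s mx phi cost (cost M)"
  shows "\<not> (\<exists>M'. phi M' \<and> \<not> fp_is_nan e s (cost M') \<and>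
              fp_better mx (fp_value e s (cost M')) (fp_value e s (cost M)))"
proof
  assume "\<exists>M'. phi M' \<and> \<not> fp_is_nan e s (cost M') \<and>
              fp_better mx (fp_value e s (cost M')) (fp_value e s (cost M))"
  then obtain M' where M': "phi M'" "\<not> fp_is_nan e s (cost M')"
    "fp_better mx (fp_value e s (cost M')) (fp_value e s (cost M))" by blast
  let ?T = "tau e s mx phi cost"
  have s1: "s \<ge> 1" using assms(2) by simp
  have lenM: "length (cost M) = e + s" using assms(3,5) by blast
  have lex: "\<forall>k < e + s. cost M ! k =
      (if \<not> sat_prefix_bit e s phi cost (take k (cost M)) (attractor e s mx (?T k) ! k)
       then \<not> (attractor e s mx (?T k) ! k) else attractor e s mx (?T k) ! k)"
    using assms(7) by (simp add: lex_max_T_def Let_def)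
  have prefM: "k \<le> e + s \<Longrightarrow> take k (cost M) = ?T k" for k
  proof (induction k)
    case 0 then show ?case by simp
  next
    case (Suc k)
    hence kl: "k < e + s" by simp
    have "take (Suc k) (cost M) = take k (cost M) @ [cost M ! k]"
      using kl lenM by (simp add: take_Suc_conv_app_nth)
    also have "\<dots> = ?T (Suc k)" using lex kl Suc.IH by (simp add: Let_def)
    finally show ?case .
  qed
  have inv: "k \<le> e + s \<Longrightarrow> \<exists>N. phi N \<and> \<not> fp_is_nan e s (cost N) \<and> take k (cost N) = ?T k \<and>
      \<not> fp_better mx (fp_value e s (cost M')) (fp_value e s (cost N))" for k
  proof (induction k)
    case 0 then show ?case using M' by (auto simp: fp_better_def)
  next
    case (Suc k)
    hence kl: "k < e + s" by simp
    then obtain N where N: "phi N" "\<not> fp_is_nan e s (cost N)" "take k (cost N) = ?T k"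
      "\<not> fp_better mx (fp_value e s (cost M')) (fp_value e s (cost N))" using Suc by auto
    define p where "p = ?T k"
    define d where "d = attractor e s mx p"
    have lp: "length p = k" by (simp add: p_def len_tau)
    have lN: "length (cost N) = e + s" using assms(3) N(1) by blast
    have Nc: "cost N \<in> fp_candidates e s p" using N lN lp by (simp add: fp_candidates_def p_def)
    have A: "d \<in> fp_candidates e s p"
      "\<forall>c \<in> fp_candidates e s p. \<not> fp_better mx (fp_value e s c) (fp_value e s d)"
      using attr[of e s p mx] Nc unfolding d_def by auto
    have TS: "?T (Suc k) = p @ [if \<not> sat_prefix_bit e s phi cost p (d ! k) then \<not> (d ! k) else d ! k]"
      by (simp add: p_def d_def Let_def)
    have tN: "take (Suc k) (cost N) = p @ [cost N ! k]"
      using N(3) kl lN by (simp add: take_Suc_conv_app_nth p_def)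
    show ?case
    proof (cases "cost N ! k = (if \<not> sat_prefix_bit e s phi cost p (d ! k) then \<not> (d ! k) else d ! k)")
      case True
      hence "take (Suc k) (cost N) = ?T (Suc k)" using tN TS by simp
      then show ?thesis using N(1,2,4) by blast
    next
      case False
      show ?thesis
      proof (cases "sat_prefix_bit e s phi cost p (d ! k)")
        case True
        then obtain F where F: "phi F" "\<not> fp_is_nan e s (cost F)" "take k (cost F) = p"
          "cost F ! k = d ! k" using lp by (auto simp: sat_prefix_bit_def)
        have lF: "length (cost F) = e + s" using assms(3) F(1) by blast
        have Nk: "cost N ! k \<noteq> d ! k" using False True by simp
        have nb: "\<not> fp_better mx (fp_value e s (cost N)) (fp_value e s (cost F))"
          using key[OF s1 kl lp A(1) A(2) lF F(2) F(3) F(4) lN N(2) _ Nk] N(3) p_def by simp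
        have nb2: "\<not> fp_better mx (fp_value e s (cost M')) (fp_value e s (cost F))"
          using nb N(4) by (auto simp: fp_better_def not_less split: if_splits)
        have "take (Suc k) (cost F) = ?T (Suc k)"
          using F(3,4) kl lF True TS by (simp add: take_Suc_conv_app_nth)
        then show ?thesis using F(1,2) nb2 by blast
      next
        case nsat: False
        have "cost N ! k = d ! k" using False nsat by simp
        hence "sat_prefix_bit e s phi cost p (d ! k)"
          using N(1,2) N(3) lp unfolding sat_prefix_bit_def p_def by auto
        then show ?thesis using nsat by simp
      qed
    qed
  qed
  obtain N where N: "phi N" "\<not> fp_is_nan e s (cost N)" "take (e + s) (cost N) = ?T (e + s)"
      "\<not> fp_better mx (fp_value e s (cost M')) (fp_value e s (cost N))" using inv[of "e + s"] by auto
  have "cost N = cost M"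
    using N(3) prefM[of "e + s"] lenM assms(3) N(1) by simp
  then show False using N(4) M'(3) by simp
qed

end
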